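(* Let $x_j$ be a real random variable and $\boldsymbol{x}_C$ a random vector independent of $x_j$. If $f(x_j,\boldsymbol{x}_C)=g(x_j)h(\boldsymbol{x}_C)$, where $g$ is a function of $x_j$ only and $h$ is a function of $\boldsymbol{x}_C$ only, then $$\mathbb{E}_{\boldsymbol{x}_C}\big[I_{ice}(x_j;\boldsymbol{x}_C)\big]\ge I_{pdp}(x_j).$$ Moreover, equality holds if $h$ is a nonnegative function.
   Context: Inputs are $\boldsymbol{x}=(x_1,\dots,x_m)$ with independent components; $C=\{1,\dots,m\}\setminus\{j\}$ and $\boldsymbol{x}_C$ denotes the vector of the inputs with indices in $C$. $\mathbb{E}_{z}$ and $\mathbb{V}_{z}$ denote expectation and variance taken with respect to the random variable $z$ only, the other arguments being held fixed. For a fixed value of $\boldsymbol{x}_C$, the ICE importance is $I_{ice}(x_j;\boldsymbol{x}_C)=\sqrt{\mathbb{V}_{x_j}[f(x_j,\boldsymbol{x}_C)]}$. The PDP importance is $I_{pdp}(x_j)=\sqrt{\mathbb{V}_{x_j}\big[\mathbb{E}_{\boldsymbol{x}_C}[f(x_j,\boldsymbol{x}_C)]\big]}$. All expectations and variances involved are assumed to exist and be finite. *)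

theory Defs
  imports "HOL-Probability.Probability"
begin

definition var_wrt :: "'b measure \<Rightarrow> ('b \<Rightarrow> real) \<Rightarrow> real" where
  "var_wrt N u = (\<integral>z. (u z - (\<integral>y. u y \<partial>N))\<^sup>2 \<partial>N)"

definition I_ice :: "'a measure \<Rightarrow> ('a \<Rightarrow> real) \<Rightarrow> (real \<Rightarrow> 'c \<Rightarrow> real) \<Rightarrow> 'c \<Rightarrow> real" where
  "I_ice M X f c = sqrt (var_wrt (distr M borel X) (\<lambda>x. f x c))"

definition I_pdp :: "'a measure \<Rightarrow> ('a \<Rightarrow> real) \<Rightarrow> 'c measure \<Rightarrow> ('a \<Rightarrow> 'c)
    \<Rightarrow> (real \<Rightarrow> 'c \<Rightarrow> real) \<Rightarrow> real" where
  "I_pdp M X MC XC f = sqrt (var_wrt (distr M borel X) (\<lambda>x. \<integral>c. f x c \<partial>(distr M MC XC)))"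

end

theory Submission
  imports Defs
begin

lemma var_wrt_scale: "var_wrt N (\<lambda>x. a * u x) = a\<^sup>2 * var_wrt N u"
proof -
  have "(\<lambda>z. (a * u z - (\<integral>y. a * u y \<partial>N))\<^sup>2) = (\<lambda>z. a\<^sup>2 * (u z - (\<integral>y. u y \<partial>N))\<^sup>2)"
    by (rule ext) (simp add: power2_eq_square algebra_simps)
  then show ?thesis unfolding var_wrt_def by simp
qed

lemma var_wrt_scale': "var_wrt N (\<lambda>x. u x * a) = a\<^sup>2 * var_wrt N u"
  using var_wrt_scale[of N a u] by (simp add: mult.commute)

theorem theorem2:
  fixes M :: "'a measure"
    and X :: "'a \<Rightarrow> real"
    and XC :: "'a \<Rightarrow> real ^ 'n"
    and f :: "real \<Rightarrow> real ^ 'n \<Rightarrow> real"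
    and g :: "real \<Rightarrow> real"
    and h :: "real ^ 'n \<Rightarrow> real"
  assumes "prob_space M"
    and "X \<in> borel_measurable M"
    and "XC \<in> borel_measurable M"
    and "prob_space.indep_set M
           (sigma_sets (space M) {X -` A \<inter> space M | A. A \<in> sets (borel :: real measure)})
           (sigma_sets (space M) {XC -` A \<inter> space M | A. A \<in> sets (borel :: (real ^ 'n) measure)})"
    and "\<And>x c. f x c = g x * h c"
    and "g \<in> borel_measurable borel"
    and "h \<in> borel_measurable borel"
    and "integrable (distr M borel X) g"
    and "integrable (distr M borel X) (\<lambda>x. (g x)\<^sup>2)"
    and "integrable (distr M borel XC) h"
  shows "(\<integral>c. I_ice M X f c \<partial>(distr M borel XC)) \<ge> I_pdp M X borel XC f
     \<and> ((\<forall>c. h c \<ge> 0) \<longrightarrow> (\<integral>c. I_ice M X f c \<partial>(distr M borel XC)) = I_pdp M X borel XC f)"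
proof -
  define P where "P = distr M borel X"
  define Q where "Q = distr M borel XC"
  define s where "s = sqrt (var_wrt P g)"
  have s0: "s \<ge> 0" unfolding s_def var_wrt_def by simp
  have ice: "I_ice M X f c = \<bar>h c\<bar> * s" for c
    unfolding I_ice_def s_def P_def[symmetric] assms(5) var_wrt_scale'
    by (simp add: real_sqrt_mult)
  have eq1: "(\<integral>c. I_ice M X f c \<partial>Q) = (\<integral>c. \<bar>h c\<bar> \<partial>Q) * s"
    unfolding ice by simp
  have inner: "(\<lambda>x. \<integral>c. f x c \<partial>Q) = (\<lambda>x. g x * (\<integral>c. h c \<partial>Q))"
    unfolding assms(5) by simp
  have pdp: "I_pdp M X borel XC f = \<bar>\<integral>c. h c \<partial>Q\<bar> * s"
    unfolding I_pdp_def P_def[symmetric] Q_def[symmetric] inner var_wrt_scale' s_def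
    by (simp add: real_sqrt_mult)
  have b: "\<bar>\<integral>c. h c \<partial>Q\<bar> \<le> (\<integral>c. \<bar>h c\<bar> \<partial>Q)" by simp
  show ?thesis
  proof
    show "(\<integral>c. I_ice M X f c \<partial>(distr M borel XC)) \<ge> I_pdp M X borel XC f"
      unfolding Q_def[symmetric] eq1 pdp using b s0 by (simp add: mult_right_mono)
    show "(\<forall>c. h c \<ge> 0) \<longrightarrow> (\<integral>c. I_ice M X f c \<partial>(distr M borel XC)) = I_pdp M X borel XC f"
    proof
      assume "\<forall>c. h c \<ge> 0"
      then have "(\<lambda>c. \<bar>h c\<bar>) = h" by auto
      moreover have "(\<integral>c. h c \<partial>Q) \<ge> 0" using \<open>\<forall>c. h c \<ge> 0\<close> by simp
      ultimately show "(\<integral>c. I_ice M X f c \<partial>(distr M borel XC)) = I_pdp M X borel XC f"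
        unfolding Q_def[symmetric] eq1 pdp by simp
    qed
  qed
qed

end
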